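(* Let $G=(V,E)$ be an undirected graph on $n$ nodes with maximum degree $\Delta \le n-1$, and let $p\in(0,1]$, $\lambda>0$. Suppose traces are generated independently by the cascade process on $G$ with parameters $p,\lambda$, each with a source chosen uniformly at random from $V$. Then with $\Theta\left(\frac{n\Delta}{p}\log n\right)$ traces, the First-Edge algorithm returns exactly the edge set $E$ with probability at least $1-\frac{1}{\mathrm{poly}(n)}$.
   Context: Cascade process with parameters $p,\lambda$ from source $s$: independently for every edge of $G$, the edge is deleted with probability $1-p$ and otherwise receives a length drawn from the exponential distribution $\mathrm{Exp}(\lambda)$ (rate $\lambda$). The infection time $t(v)$ of a node $v$ is its shortest-path distance from $s$ in the subgraph of retained edges with these lengths ($t(s)=0$; $t(v)=\infty$ if unreachable). A trace is the sequence of pairs $(v,t(v))$ for all nodes with finite $t(v)$, listed in increasing order of $t(v)$. The First-Edge algorithm: for every input trace containing at least two nodes, add to the output edge set the edge joining the first two nodes of the trace, ignoring the rest of the trace; output the resulting set of edges. *)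

theory Defs
  imports "HOL-Probability.Probability"
begin

definition simple_graph :: "nat set \<Rightarrow> nat set set \<Rightarrow> bool" where
  "simple_graph V E \<longleftrightarrow> finite V \<and> E \<subseteq> {{u, v} | u v. u \<in> V \<and> v \<in> V \<and> u \<noteq> v}"

definition degree :: "nat set set \<Rightarrow> nat \<Rightarrow> nat" where
  "degree E v = card {e \<in> E. v \<in> e}"

definition max_degree :: "nat set \<Rightarrow> nat set set \<Rightarrow> nat" where
  "max_degree V E = Max (degree E ` V)"

(* Randomness attached to an edge e: fst = edge retained (prob. p), snd = its length (Exp(lambda)).
   An edge is deleted iff fst is False; then its length is irrelevant. *)
type_synonym edge_sample = "nat set \<Rightarrow> bool \<times> real"

definition edge_measure :: "real \<Rightarrow> real \<Rightarrow> (bool \<times> real) measure" where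
  "edge_measure p l = measure_pmf (bernoulli_pmf p) \<Otimes>\<^sub>M density lborel (\<lambda>x. ennreal (exponential_density l x))"

definition cascade_measure :: "nat set \<Rightarrow> nat set set \<Rightarrow> real \<Rightarrow> real \<Rightarrow> (nat \<times> edge_sample) measure" where
  "cascade_measure V E p l = measure_pmf (pmf_of_set V) \<Otimes>\<^sub>M (\<Pi>\<^sub>M e\<in>E. edge_measure p l)"

definition cascades_measure :: "nat \<Rightarrow> nat set \<Rightarrow> nat set set \<Rightarrow> real \<Rightarrow> real \<Rightarrow> (nat \<Rightarrow> nat \<times> edge_sample) measure" where
  "cascades_measure N V E p l = (\<Pi>\<^sub>M i\<in>{..<N}. cascade_measure V E p l)"

definition retained_walks :: "nat set set \<Rightarrow> edge_sample \<Rightarrow> nat \<Rightarrow> nat \<Rightarrow> nat list set" where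
  "retained_walks E \<omega> s v = {xs. xs \<noteq> [] \<and> hd xs = s \<and> last xs = v \<and>
      (\<forall>i < length xs - 1. {xs ! i, xs ! Suc i} \<in> E \<and> fst (\<omega> {xs ! i, xs ! Suc i}))}"

(* infection time = shortest-path distance from s (infinite if unreachable) *)
definition infection_time :: "nat set set \<Rightarrow> edge_sample \<Rightarrow> nat \<Rightarrow> nat \<Rightarrow> ennreal" where
  "infection_time E \<omega> s v = (INF xs \<in> retained_walks E \<omega> s v.
      \<Sum>i < length xs - 1. ennreal (snd (\<omega> {xs ! i, xs ! Suc i})))"

(* the trace: infected nodes with their times, in increasing order of time
   (ties, which have probability zero, are broken by vertex label via a stable sort) *)
definition trace :: "nat set \<Rightarrow> nat set set \<Rightarrow> edge_sample \<Rightarrow> nat \<Rightarrow> (nat \<times> ennreal) list" where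
  "trace V E \<omega> s = (let t = infection_time E \<omega> s in
      map (\<lambda>v. (v, t v)) (sort_key t (filter (\<lambda>v. t v < \<infinity>) (sorted_list_of_set V))))"

definition first_edge :: "(nat \<times> ennreal) list list \<Rightarrow> nat set set" where
  "first_edge trs = {{fst (tr ! 0), fst (tr ! 1)} | tr. tr \<in> set trs \<and> 2 \<le> length tr}"

definition first_edge_succeeds :: "nat \<Rightarrow> nat set \<Rightarrow> nat set set \<Rightarrow> (nat \<Rightarrow> nat \<times> edge_sample) set" where
  "first_edge_succeeds N V E = {\<omega>. first_edge (map (\<lambda>i. trace V E (snd (\<omega> i)) (fst (\<omega> i))) [0..<N]) = E}"

end

theory Submission
  imports Defs
begin

lemma prob_edge: "0 \<le> p \<Longrightarrow> p \<le> 1 \<Longrightarrow> 0 < l \<Longrightarrow> prob_space (edge_measure p l)"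
  unfolding edge_measure_def
  by (intro prob_space_pair prob_space_measure_pmf prob_space_exponential_density) 

lemma PiM_rect:
  assumes "finite I" "\<And>i. i\<in>I \<Longrightarrow> prob_space (M i)" "\<And>i. i\<in>I \<Longrightarrow> A i \<in> sets (M i)"
  shows "measure (PiM I M) (Pi\<^sub>E I A) = (\<Prod>i\<in>I. measure (M i) (A i))"
proof -
  let ?M = "\<lambda>i. if i \<in> I then M i else count_space {undefined}"
  interpret M': prob_space "?M i" for i
    using assms(2) by (cases "i \<in> I") (auto intro!: prob_spaceI)
  interpret product_prob_space ?M I
    by unfold_locales
  have eq: "PiM I M = PiM I ?M" by (rule PiM_cong) auto
  have "emeasure (PiM I M) (Pi\<^sub>E I A) = (\<Prod>i\<in>I. emeasure (?M i) (A i))"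
    unfolding eq using assms by (intro emeasure_PiM) auto
  also have "\<dots> = (\<Prod>i\<in>I. ennreal (measure (M i) (A i)))"
  proof (intro prod.cong refl)
    fix i assume i: "i \<in> I"
    interpret prob_space "M i" using assms(2)[OF i] .
    show "emeasure (?M i) (A i) = ennreal (measure (M i) (A i))" using i by (simp add: emeasure_eq_measure)
  qed
  also have "\<dots> = ennreal (\<Prod>i\<in>I. measure (M i) (A i))"
    by (simp add: prod_ennreal)
  finally show ?thesis
    by (simp add: measure_def prod_nonneg)
qed

lemma exp_meas:
  fixes l :: real assumes l: "0 < l" and t: "0 \<le> t"
  shows "measure (density lborel (\<lambda>x. ennreal (exponential_density l x))) {t<..} = exp (- t * l)"
    and "measure (density lborel (\<lambda>x. ennreal (exponential_density l x))) {..t} = 1 - exp (- t * l)"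
proof -
  let ?D = "density lborel (\<lambda>x. ennreal (exponential_density l x))"
  interpret prob_space ?D using prob_space_exponential_density[OF l] .
  have D: "distributed ?D lborel (\<lambda>x. x) (exponential_density l)"
    unfolding distributed_def by (auto simp: distr_id2)
  have "\<P>(x in ?D. t < x) = exp (- t * l)" by (rule exponential_distributedD_gt[OF D t l])
  moreover have "{x \<in> space ?D. t < x} = {t<..}" by auto
  ultimately show "measure ?D {t<..} = exp (- t * l)" by simp
  have "\<P>(x in ?D. x \<le> t) = 1 - exp (- t * l)" by (rule exponential_distributedD_le[OF D t l])
  moreover have "{x \<in> space ?D. x \<le> t} = {..t}" by auto
  ultimately show "measure ?D {..t} = 1 - exp (- t * l)" by simp
qed

lemma pair_rect:
  assumes "prob_space M1" "prob_space M2" "A \<in> sets M1" "B \<in> sets M2"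
  shows "measure (M1 \<Otimes>\<^sub>M M2) (A \<times> B) = measure M1 A * measure M2 B"
proof -
  interpret M1: prob_space M1 by fact
  interpret M2: prob_space M2 by fact
  interpret P: pair_prob_space M1 M2 ..
  have "emeasure (M1 \<Otimes>\<^sub>M M2) (A \<times> B) = emeasure M1 A * emeasure M2 B"
    using assms by (intro M2.emeasure_pair_measure_Times) auto
  then show ?thesis
    by (simp add: M1.emeasure_eq_measure M2.emeasure_eq_measure P.emeasure_eq_measure ennreal_mult''[symmetric])
qed

lemma edge_meas:
  fixes p l t :: real assumes p: "0 \<le> p" "p \<le> 1" and l: "0 < l" and t: "0 \<le> t"
  shows "measure (edge_measure p l) ({True} \<times> {0<..t}) = p * (1 - exp (- t * l))"
    and "measure (edge_measure p l) (UNIV \<times> {t<..}) = exp (- t * l)"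
    and "measure (edge_measure p l) (UNIV \<times> {0<..}) = 1"
proof -
  let ?D = "density lborel (\<lambda>x. ennreal (exponential_density l x))"
  interpret D: prob_space ?D using prob_space_exponential_density[OF l] .
  have PD: "prob_space ?D" using prob_space_exponential_density[OF l] .
  have PB: "prob_space (measure_pmf (bernoulli_pmf p))" by (rule prob_space_measure_pmf)
  have "{0<..t} = {..t} - {..0::real}" by auto
  then have "measure ?D {0<..t} = measure ?D {..t} - measure ?D {..0}"
    using t by (simp add: D.finite_measure_Diff)
  also have "\<dots> = 1 - exp (- t * l)" using exp_meas(2)[OF l t] exp_meas(2)[OF l order_refl] by simp
  finally have m1: "measure ?D {0<..t} = 1 - exp (- t * l)" .
  show "measure (edge_measure p l) ({True} \<times> {0<..t}) = p * (1 - exp (- t * l))"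
    unfolding edge_measure_def using p
    by (subst pair_rect[OF PB PD]) (auto simp: m1 measure_pmf_single)
  show "measure (edge_measure p l) (UNIV \<times> {t<..}) = exp (- t * l)"
    unfolding edge_measure_def using p
    by (subst pair_rect[OF PB PD]) (auto simp: exp_meas(1)[OF l t])
  show "measure (edge_measure p l) (UNIV \<times> {0<..}) = 1"
    unfolding edge_measure_def using p
    by (subst pair_rect[OF PB PD]) (auto simp: exp_meas(1)[OF l order_refl])
qed

definition walk_val :: "nat set set \<Rightarrow> nat \<Rightarrow> nat list \<Rightarrow> nat \<times> edge_sample \<Rightarrow> ennreal" where
  "walk_val E v xs x = (if xs \<in> retained_walks E (snd x) (fst x) v
     then (\<Sum>i < length xs - 1. ennreal (snd (snd x {xs ! i, xs ! Suc i}))) else top)"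

lemma infection_time_alt:
  "infection_time E (snd x) (fst x) v = (INF xs\<in>UNIV. walk_val E v xs x)"
proof -
  have "(INF xs\<in>UNIV. walk_val E v xs x) = (INF xs\<in>retained_walks E (snd x) (fst x) v. walk_val E v xs x)"
  proof (rule antisym)
    show "(INF xs\<in>UNIV. walk_val E v xs x) \<le> (INF xs\<in>retained_walks E (snd x) (fst x) v. walk_val E v xs x)"
      by (rule INF_superset_mono) auto
    show "(INF xs\<in>retained_walks E (snd x) (fst x) v. walk_val E v xs x) \<le> (INF xs\<in>UNIV. walk_val E v xs x)"
      by (rule INF_greatest) (auto simp: walk_val_def intro: INF_lower)
  qed
  then show ?thesis unfolding infection_time_def
    by (simp add: walk_val_def)
qed

lemma walk_val_meas:
  assumes "finite E"
  shows "walk_val E v xs \<in> borel_measurable (cascade_measure V E p l)"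
proof (cases "\<forall>i < length xs - 1. {xs ! i, xs ! Suc i} \<in> E")
  case False
  then have "walk_val E v xs = (\<lambda>x. top)"
    by (auto simp: walk_val_def retained_walks_def fun_eq_iff)
  then show ?thesis by simp
next
  case True
  have "walk_val E v xs = (\<lambda>x. if xs \<noteq> [] \<and> hd xs = fst x \<and> last xs = v \<and>
      (\<forall>i\<in>{..<length xs - 1}. fst (snd x {xs ! i, xs ! Suc i}))
     then (\<Sum>i < length xs - 1. ennreal (snd (snd x {xs ! i, xs ! Suc i}))) else top)"
    using True by (auto simp: walk_val_def retained_walks_def fun_eq_iff)
  also have "\<dots> \<in> borel_measurable (cascade_measure V E p l)"
    unfolding cascade_measure_def edge_measure_def
  proof (intro measurable_If borel_measurable_sum borel_measurable_const)
    have Ti: "\<And>i. i \<in> {..<length xs - 1} \<Longrightarrow> {xs ! i, xs ! Suc i} \<in> E" using True by auto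
    show "(\<lambda>x. ennreal (snd (snd x {xs ! i, xs ! Suc i}))) \<in> borel_measurable (measure_pmf (pmf_of_set V) \<Otimes>\<^sub>M
         Pi\<^sub>M E (\<lambda>e. measure_pmf (bernoulli_pmf p) \<Otimes>\<^sub>M density lborel (\<lambda>x. ennreal (exponential_density l x))))"
      if "i \<in> {..<length xs - 1}" for i
      using Ti[OF that] by measurable
    have h: "Measurable.pred (measure_pmf (pmf_of_set V) \<Otimes>\<^sub>M
         Pi\<^sub>M E (\<lambda>e. measure_pmf (bernoulli_pmf p) \<Otimes>\<^sub>M density lborel (\<lambda>x. ennreal (exponential_density l x)))) (\<lambda>x. hd xs = fst x)"
      by (rule measurable_compose[OF measurable_fst]) simp
    show "{x \<in> space (measure_pmf (pmf_of_set V) \<Otimes>\<^sub>M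
         Pi\<^sub>M E (\<lambda>e. measure_pmf (bernoulli_pmf p) \<Otimes>\<^sub>M density lborel (\<lambda>x. ennreal (exponential_density l x)))).
      xs \<noteq> [] \<and> hd xs = fst x \<and> last xs = v \<and> (\<forall>i\<in>{..<length xs - 1}. fst (snd x {xs ! i, xs ! Suc i}))} \<in> sets (measure_pmf (pmf_of_set V) \<Otimes>\<^sub>M
         Pi\<^sub>M E (\<lambda>e. measure_pmf (bernoulli_pmf p) \<Otimes>\<^sub>M density lborel (\<lambda>x. ennreal (exponential_density l x))))"
      using Ti h by measurable
  qed
  finally show ?thesis .
qed

lemma tt_meas[measurable]:
  assumes "finite E"
  shows "(\<lambda>x. infection_time E (snd x) (fst x) v) \<in> borel_measurable (cascade_measure V E p l)"
  unfolding infection_time_alt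
  by (rule borel_measurable_INF) (auto intro: walk_val_meas[OF assms])

lemma insort_key_cong:
  "\<forall>y\<in>set ys. (f x \<le> f y) = (g x \<le> g y) \<Longrightarrow> insort_key f x ys = insort_key g x ys"
  by (induction ys) auto

lemma sort_key_cong':
  "\<forall>a\<in>set xs. \<forall>b\<in>set xs. (f a \<le> f b) = (g a \<le> g b) \<Longrightarrow> sort_key f xs = sort_key g xs"
proof (induction xs)
  case (Cons x xs)
  then have "sort_key f xs = sort_key g xs" by auto
  moreover have "insort_key f x (sort_key g xs) = insort_key g x (sort_key g xs)"
    using Cons.prems by (intro insort_key_cong) auto
  ultimately show ?case by simp
qed simp

definition Dfun :: "nat set \<Rightarrow> nat set set \<Rightarrow> nat \<times> edge_sample \<Rightarrow> nat \<times> (nat \<times> nat) set \<times> nat set" where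
  "Dfun V E x = (fst x, {(a,b). a \<in> V \<and> b \<in> V \<and> infection_time E (snd x) (fst x) a \<le> infection_time E (snd x) (fst x) b},
      {v \<in> V. infection_time E (snd x) (fst x) v < \<infinity>})"

definition fstlist :: "nat set \<Rightarrow> nat set set \<Rightarrow> nat \<times> edge_sample \<Rightarrow> nat list" where
  "fstlist V E x = map fst (trace V E (snd x) (fst x))"

lemma fstlist_eq:
  "fstlist V E x = (let t = infection_time E (snd x) (fst x) in sort_key t (filter (\<lambda>v. t v < \<infinity>) (sorted_list_of_set V)))"
  unfolding fstlist_def trace_def Let_def by (simp add: comp_def)

lemma Dfun_inv:
  assumes "finite V" "Dfun V E x = Dfun V E y"
  shows "fstlist V E x = fstlist V E y"
proof -
  let ?t = "infection_time E (snd x) (fst x)"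
  let ?u = "infection_time E (snd y) (fst y)"
  have s: "fst x = fst y" and R: "\<And>a b. a \<in> V \<Longrightarrow> b \<in> V \<Longrightarrow> (?t a \<le> ?t b) = (?u a \<le> ?u b)"
    and F: "\<And>v. v \<in> V \<Longrightarrow> (?t v < \<infinity>) = (?u v < \<infinity>)"
  proof -
    have eqs: "fst x = fst y"
      "{(a,b). a \<in> V \<and> b \<in> V \<and> ?t a \<le> ?t b} = {(a,b). a \<in> V \<and> b \<in> V \<and> ?u a \<le> ?u b}"
      "{v \<in> V. ?t v < \<infinity>} = {v \<in> V. ?u v < \<infinity>}"
      using assms(2) unfolding Dfun_def prod.inject by blast+
    show "fst x = fst y" by (fact eqs(1))
    show "\<And>a b. a \<in> V \<Longrightarrow> b \<in> V \<Longrightarrow> (?t a \<le> ?t b) = (?u a \<le> ?u b)"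
      using eqs(2) by (auto simp: set_eq_iff)
    show "\<And>v. v \<in> V \<Longrightarrow> (?t v < \<infinity>) = (?u v < \<infinity>)"
      using eqs(3) by (metis (mono_tags, lifting) mem_Collect_eq)
  qed
  have f: "filter (\<lambda>v. ?t v < \<infinity>) (sorted_list_of_set V) = filter (\<lambda>v. ?u v < \<infinity>) (sorted_list_of_set V)"
    by (rule filter_cong) (use F assms(1) in auto)
  show ?thesis unfolding fstlist_eq Let_def f
    by (rule sort_key_cong') (auto simp: R assms(1))
qed

lemma pred_Dfun:
  assumes "finite E"
  shows "Measurable.pred (cascade_measure V E p l) (\<lambda>x. Dfun V E x = d)"
proof -
  obtain s0 R0 F0 where d: "d = (s0, R0, F0)" by (cases d) auto
  have eq: "(\<lambda>x. Dfun V E x = d) = (\<lambda>x. fst x = s0 \<and> R0 \<subseteq> V \<times> V \<and> F0 \<subseteq> V \<and>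
     (\<forall>a\<in>V. \<forall>b\<in>V. (infection_time E (snd x) (fst x) a \<le> infection_time E (snd x) (fst x) b) = ((a,b) \<in> R0)) \<and>
     (\<forall>v\<in>V. (infection_time E (snd x) (fst x) v < \<infinity>) = (v \<in> F0)))"
    unfolding d Dfun_def by (auto simp: fun_eq_iff set_eq_iff)
  have h: "Measurable.pred (cascade_measure V E p l) (\<lambda>x. fst x = s0)"
    unfolding cascade_measure_def by (rule measurable_compose[OF measurable_fst]) simp
  show ?thesis unfolding eq using h assms by measurable
qed

lemma FE_eq:
  "first_edge (map (\<lambda>i. trace V E (snd (\<omega> i)) (fst (\<omega> i))) [0..<N]) =
   {{fstlist V E (\<omega> i) ! 0, fstlist V E (\<omega> i) ! 1} | i. i < N \<and> 2 \<le> length (fstlist V E (\<omega> i))}"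
  unfolding first_edge_def fstlist_def
proof (intro set_eqI iffI)
  fix x assume "x \<in> {{fst (tr ! 0), fst (tr ! 1)} |tr.
      tr \<in> set (map (\<lambda>i. trace V E (snd (\<omega> i)) (fst (\<omega> i))) [0..<N]) \<and> 2 \<le> length tr}"
  then obtain i where "i < N" "x = {fst (trace V E (snd (\<omega> i)) (fst (\<omega> i)) ! 0), fst (trace V E (snd (\<omega> i)) (fst (\<omega> i)) ! 1)}"
     "2 \<le> length (trace V E (snd (\<omega> i)) (fst (\<omega> i)))" by auto
  note a = this
  have l: "0 < length (trace V E (snd (\<omega> i)) (fst (\<omega> i)))" "1 < length (trace V E (snd (\<omega> i)) (fst (\<omega> i)))" using a(3) by auto
  show "x \<in> {{map fst (trace V E (snd (\<omega> i)) (fst (\<omega> i))) ! 0, map fst (trace V E (snd (\<omega> i)) (fst (\<omega> i))) ! 1} |i.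
       i < N \<and> 2 \<le> length (map fst (trace V E (snd (\<omega> i)) (fst (\<omega> i))))}"
    using a l by (intro CollectI exI[of _ i]) (simp add: nth_map del: One_nat_def)
next
  fix x assume "x \<in> {{map fst (trace V E (snd (\<omega> i)) (fst (\<omega> i))) ! 0, map fst (trace V E (snd (\<omega> i)) (fst (\<omega> i))) ! 1} |i.
       i < N \<and> 2 \<le> length (map fst (trace V E (snd (\<omega> i)) (fst (\<omega> i))))}"
  then obtain i where a: "i < N" "x = {map fst (trace V E (snd (\<omega> i)) (fst (\<omega> i))) ! 0, map fst (trace V E (snd (\<omega> i)) (fst (\<omega> i))) ! 1}"
     "2 \<le> length (trace V E (snd (\<omega> i)) (fst (\<omega> i)))" by auto
  have l: "0 < length (trace V E (snd (\<omega> i)) (fst (\<omega> i)))" "1 < length (trace V E (snd (\<omega> i)) (fst (\<omega> i)))" using a(3) by auto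
  have "x = {fst (trace V E (snd (\<omega> i)) (fst (\<omega> i)) ! 0), fst (trace V E (snd (\<omega> i)) (fst (\<omega> i)) ! 1)}"
    using a(2) l by (simp add: nth_map del: One_nat_def)
  with a show "x \<in> {{fst (tr ! 0), fst (tr ! 1)} |tr.
      tr \<in> set (map (\<lambda>i. trace V E (snd (\<omega> i)) (fst (\<omega> i))) [0..<N]) \<and> 2 \<le> length tr}"
    by auto
qed

lemma succeeds_meas:
  assumes "finite V" "finite E"
  shows "first_edge_succeeds N V E \<inter> space (cascades_measure N V E p l) \<in> sets (cascades_measure N V E p l)"
proof -
  let ?M = "cascades_measure N V E p l"
  let ?A = "first_edge_succeeds N V E \<inter> space ?M"
  let ?h = "\<lambda>\<omega>. \<lambda>i\<in>{..<N}. Dfun V E (\<omega> i)"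
  let ?G = "?h ` ?A"
  let ?DS = "(UNIV::nat set) \<times> Pow (V \<times> V) \<times> Pow V"
  have cDS: "countable ?DS" using assms(1)
  proof -
    have c: "countable (Pow (V \<times> V) \<times> Pow V)" by (rule countable_finite) (simp add: assms(1))
    show ?thesis by (rule countable_SIGMA) (simp, rule c)
  qed
  have Din: "\<And>x. Dfun V E x \<in> ?DS" unfolding Dfun_def by (intro SigmaI UNIV_I PowI) auto
  have "?G \<subseteq> Pi\<^sub>E {..<N} (\<lambda>_. ?DS)"
  proof
    fix f assume "f \<in> ?G"
    then obtain \<omega> where "f = ?h \<omega>" by blast
    then show "f \<in> Pi\<^sub>E {..<N} (\<lambda>_. ?DS)" using Din by (simp add: restrict_PiE_iff)
  qed
  then have cG: "countable ?G" by (rule countable_subset) (intro countable_PiE cDS, auto)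
  have eq: "?A = (\<Union>d\<in>?G. {\<omega> \<in> space ?M. \<forall>i\<in>{..<N}. Dfun V E (\<omega> i) = d i})"
  proof (intro equalityI subsetI)
    fix \<omega> assume "\<omega> \<in> ?A" then show "\<omega> \<in> (\<Union>d\<in>?G. {\<omega> \<in> space ?M. \<forall>i\<in>{..<N}. Dfun V E (\<omega> i) = d i})"
      by auto
  next
    fix \<omega>' assume "\<omega>' \<in> (\<Union>d\<in>?G. {\<omega> \<in> space ?M. \<forall>i\<in>{..<N}. Dfun V E (\<omega> i) = d i})"
    then obtain \<omega> where w: "\<omega> \<in> ?A" and w': "\<omega>' \<in> space ?M" and d: "\<forall>i\<in>{..<N}. Dfun V E (\<omega>' i) = Dfun V E (\<omega> i)"
      by auto
    have "fstlist V E (\<omega>' i) = fstlist V E (\<omega> i)" if i: "i < N" for i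
    proof -
      have "Dfun V E (\<omega>' i) = Dfun V E (\<omega> i)" using d i by simp
      then show ?thesis by (rule Dfun_inv[OF assms(1)])
    qed
    then have "first_edge (map (\<lambda>i. trace V E (snd (\<omega>' i)) (fst (\<omega>' i))) [0..<N]) =
               first_edge (map (\<lambda>i. trace V E (snd (\<omega> i)) (fst (\<omega> i))) [0..<N])"
      unfolding FE_eq by force
    with w w' show "\<omega>' \<in> ?A" by (auto simp: first_edge_succeeds_def)
  qed
  have "(\<Union>d\<in>?G. {\<omega> \<in> space ?M. \<forall>i\<in>{..<N}. Dfun V E (\<omega> i) = d i}) \<in> sets ?M"
  proof (rule sets.countable_UN''[OF cG])
    fix d
    have "Measurable.pred ?M (\<lambda>\<omega>. \<forall>i\<in>{..<N}. Dfun V E (\<omega> i) = d i)"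
    proof (rule pred_intros_finite(3))
      fix i assume i: "i \<in> {..<N}"
      show "Measurable.pred ?M (\<lambda>\<omega>. Dfun V E (\<omega> i) = d i)"
        unfolding cascades_measure_def
        by (rule measurable_compose[OF measurable_component_singleton[OF i] pred_Dfun[OF assms(2)]])
    qed simp
    then show "{\<omega> \<in> space ?M. \<forall>i\<in>{..<N}. Dfun V E (\<omega> i) = d i} \<in> sets ?M"
      by (simp add: pred_def)
  qed
  then show ?thesis by (subst eq)
qed

lemma sortkey_first:
  fixes t :: "'a \<Rightarrow> 'b::linorder"
  assumes "a \<in> set xs" "\<forall>y\<in>set xs. y \<noteq> a \<longrightarrow> t a < t y"
  shows "sort_key t xs ! 0 = a"
proof -
  let ?ys = "sort_key t xs"
  have ne: "0 < length ?ys" using assms(1) by (cases xs) auto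
  have s: "sorted (map t ?ys)" by simp
  obtain j where j: "j < length ?ys" "?ys ! j = a" using assms(1) by (metis in_set_conv_nth set_sort)
  have "t (?ys ! 0) \<le> t (?ys ! j)" using s j ne by (auto simp: sorted_iff_nth_mono)
  moreover have "?ys ! 0 \<in> set xs" using ne by (metis nth_mem set_sort)
  ultimately show ?thesis using assms(2) j by (metis leD)
qed

lemma sortkey_second:
  fixes t :: "'a \<Rightarrow> 'b::linorder"
  assumes "distinct xs" "2 \<le> length xs"
  shows "sort_key t xs ! 1 \<in> set xs" "sort_key t xs ! 1 \<noteq> sort_key t xs ! 0"
    "\<And>y. y \<in> set xs \<Longrightarrow> y \<noteq> sort_key t xs ! 0 \<Longrightarrow> t (sort_key t xs ! 1) \<le> t y"
proof -
  let ?ys = "sort_key t xs"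
  have d: "distinct ?ys" using assms(1) by simp
  have l: "2 \<le> length ?ys" using assms(2) by simp
  have s: "sorted (map t ?ys)" by simp
  show "?ys ! 1 \<in> set xs" using l by (metis One_nat_def Suc_1 Suc_le_lessD nth_mem set_sort)
  have "xs \<noteq> []" using assms(2) by auto
  then show "?ys ! 1 \<noteq> ?ys ! 0" using l nth_eq_iff_index_eq[OF d, of 1 0] by simp
  fix y assume y: "y \<in> set xs" "y \<noteq> ?ys ! 0"
  obtain j where j: "j < length ?ys" "?ys ! j = y" using y(1) by (metis in_set_conv_nth set_sort)
  have "j \<noteq> 0" using j y by (metis)
  then have "1 \<le> j" by simp
  then show "t (?ys ! 1) \<le> t y" using s j l by (auto simp: sorted_iff_nth_mono)
qed

lemma edge_props:
  assumes "simple_graph V E" "{x, y} \<in> E"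
  shows "x \<noteq> y" "x \<in> V" "y \<in> V"
  using assms unfolding simple_graph_def by (auto simp: doubleton_eq_iff)

lemma t_self: "infection_time E \<omega> s s = 0"
proof -
  have "[s] \<in> retained_walks E \<omega> s s" by (simp add: retained_walks_def)
  then have "infection_time E \<omega> s s \<le> (\<Sum>i < length [s] - 1. ennreal (snd (\<omega> {[s] ! i, [s] ! Suc i})))"
    unfolding infection_time_def by (rule INF_lower)
  then show ?thesis by simp
qed

lemma t_edge:
  assumes "{s, w} \<in> E" "fst (\<omega> {s, w})"
  shows "infection_time E \<omega> s w \<le> ennreal (snd (\<omega> {s, w}))"
proof -
  have "[s, w] \<in> retained_walks E \<omega> s w" using assms by (simp add: retained_walks_def)
  then have "infection_time E \<omega> s w \<le> (\<Sum>i < length [s, w] - 1. ennreal (snd (\<omega> {[s, w] ! i, [s, w] ! Suc i})))"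
    unfolding infection_time_def by (rule INF_lower)
  then show ?thesis by simp
qed

lemma walk_lower:
  assumes xs: "xs \<in> retained_walks E \<omega> s w" and ne: "w \<noteq> s"
  shows "2 \<le> length xs" "{s, xs ! 1} \<in> E" "fst (\<omega> {s, xs ! 1})"
    "(\<Sum>i < length xs - 1. ennreal (snd (\<omega> {xs ! i, xs ! Suc i}))) \<ge> ennreal (snd (\<omega> {s, xs ! 1}))"
    "xs ! 1 \<noteq> w \<Longrightarrow> {xs ! 1, xs ! 2} \<in> E \<and>
      (\<Sum>i < length xs - 1. ennreal (snd (\<omega> {xs ! i, xs ! Suc i}))) \<ge> ennreal (snd (\<omega> {s, xs ! 1})) + ennreal (snd (\<omega> {xs ! 1, xs ! 2}))"
proof -
  have x: "xs \<noteq> []" "hd xs = s" "last xs = w"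
    and ed: "\<And>i. i < length xs - 1 \<Longrightarrow> {xs ! i, xs ! Suc i} \<in> E \<and> fst (\<omega> {xs ! i, xs ! Suc i})"
    using xs by (auto simp: retained_walks_def)
  have h0: "xs ! 0 = s" using x by (simp add: hd_conv_nth)
  show l2: "2 \<le> length xs"
  proof (rule ccontr)
    assume "\<not> 2 \<le> length xs"
    moreover have "0 < length xs" using x(1) by simp
    ultimately have "length xs = 1" by linarith
    then have "last xs = hd xs" by (cases xs) auto
    with x ne show False by simp
  qed
  have e0: "{xs ! 0, xs ! Suc 0} \<in> E \<and> fst (\<omega> {xs ! 0, xs ! Suc 0})" using ed[of 0] l2 by simp
  then show "{s, xs ! 1} \<in> E" "fst (\<omega> {s, xs ! 1})" using h0 by auto
  let ?f = "\<lambda>i. ennreal (snd (\<omega> {xs ! i, xs ! Suc i}))"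
  have "sum ?f {0} \<le> sum ?f {..<length xs - 1}"
    by (rule sum_mono2) (use l2 in auto)
  then show "(\<Sum>i < length xs - 1. ?f i) \<ge> ennreal (snd (\<omega> {s, xs ! 1}))" using h0 by simp
  assume nw: "xs ! 1 \<noteq> w"
  have l3: "3 \<le> length xs"
  proof (rule ccontr)
    assume "\<not> 3 \<le> length xs"
    with l2 have "length xs = 2" by simp
    then have "last xs = xs ! 1" using last_conv_nth[of xs] x(1) by (simp add: numeral_2_eq_2)
    with x nw show False by simp
  qed
  have "{xs ! 1, xs ! 2} \<in> E" using ed[of 1] l3 by (simp add: numeral_2_eq_2)
  moreover have "sum ?f {0, 1} \<le> sum ?f {..<length xs - 1}"
    by (rule sum_mono2) (use l3 in auto)
  ultimately show "{xs ! 1, xs ! 2} \<in> E \<and> (\<Sum>i < length xs - 1. ?f i) \<ge> ennreal (snd (\<omega> {s, xs ! 1})) + ennreal (snd (\<omega> {xs ! 1, xs ! 2}))"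
    using h0 by (simp add: numeral_2_eq_2)
qed

lemma t_lower:
  assumes "w \<noteq> s" "\<And>e. e \<in> E \<Longrightarrow> c \<le> snd (\<omega> e)"
  shows "ennreal c \<le> infection_time E \<omega> s w"
  unfolding infection_time_def
proof (rule INF_greatest)
  fix xs assume xs: "xs \<in> retained_walks E \<omega> s w"
  have "ennreal c \<le> ennreal (snd (\<omega> {s, xs ! 1}))"
    using assms(2) walk_lower(2)[OF xs assms(1)] by (intro ennreal_leI) auto
  also have "\<dots> \<le> (\<Sum>i < length xs - 1. ennreal (snd (\<omega> {xs ! i, xs ! Suc i})))"
    by (rule walk_lower(4)[OF xs assms(1)])
  finally show "ennreal c \<le> (\<Sum>i < length xs - 1. ennreal (snd (\<omega> {xs ! i, xs ! Suc i})))" .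
qed

lemma t_fin_walk:
  assumes "infection_time E \<omega> s w < \<infinity>"
  obtains xs where "xs \<in> retained_walks E \<omega> s w"
proof (cases "retained_walks E \<omega> s w = {}")
  case True
  then have "infection_time E \<omega> s w = top" unfolding infection_time_def by simp
  with assms show ?thesis by simp
next
  case False
  then show ?thesis using that by blast
qed

lemma first_in_E:
  assumes G: "simple_graph V E" and pos: "\<forall>e\<in>E. 0 < snd (\<omega> e)"
    and len: "2 \<le> length (fstlist V E (s, \<omega>))"
  shows "{fstlist V E (s, \<omega>) ! 0, fstlist V E (s, \<omega>) ! 1} \<in> E"
proof -
  let ?t = "infection_time E \<omega> s"
  let ?xs = "filter (\<lambda>v. ?t v < \<infinity>) (sorted_list_of_set V)"
  let ?ys = "sort_key ?t ?xs"
  have finV: "finite V" using G by (simp add: simple_graph_def)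
  have finE: "finite E"
  proof -
    have "E \<subseteq> Pow V" using G unfolding simple_graph_def by auto
    then show ?thesis using finV by (meson finite_Pow_iff finite_subset)
  qed
  have ys: "fstlist V E (s, \<omega>) = ?ys" by (simp add: fstlist_eq Let_def)
  have setxs: "set ?xs = {v \<in> V. ?t v < \<infinity>}" using finV by auto
  have dxs: "distinct ?xs" by simp
  have lxs: "2 \<le> length ?xs" using len ys by simp
  obtain a where a: "a \<in> set ?xs" "a \<noteq> s"
  proof -
    have "?xs \<noteq> []" using lxs by auto
    then have "?xs ! 0 \<noteq> ?xs ! 1" using lxs nth_eq_iff_index_eq[OF dxs, of 0 1] by simp
    moreover have l01: "0 < length ?xs" "1 < length ?xs" using lxs by auto
    have "?xs ! 0 \<in> set ?xs" "?xs ! 1 \<in> set ?xs" by (rule nth_mem[OF l01(1)], rule nth_mem[OF l01(2)])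
    ultimately show ?thesis using that by metis
  qed
  then have "?t a < \<infinity>" using setxs by auto
  then obtain ws where ws: "ws \<in> retained_walks E \<omega> s a" by (rule t_fin_walk)
  have e1: "{s, ws ! 1} \<in> E" by (rule walk_lower(2)[OF ws a(2)])
  then have Ene: "E \<noteq> {}" and sV: "s \<in> V" using edge_props[OF G e1] by auto
  define \<mu> where "\<mu> = Min ((\<lambda>e. snd (\<omega> e)) ` E)"
  have mu_le: "\<And>e. e \<in> E \<Longrightarrow> \<mu> \<le> snd (\<omega> e)" unfolding \<mu>_def using finE by auto
  have mu_pos: "0 < \<mu>" unfolding \<mu>_def using finE Ene pos by (subst Min_gr_iff) auto
  have tlow: "\<And>w. w \<noteq> s \<Longrightarrow> ennreal \<mu> \<le> ?t w" by (rule t_lower) (auto intro: mu_le)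
  have ts: "?t s = 0" by (rule t_self)
  have s_in: "s \<in> set ?xs" using setxs sV ts by simp
  have y0: "?ys ! 0 = s"
  proof (rule sortkey_first[OF s_in], intro ballI impI)
    fix y assume "y \<in> set ?xs" "y \<noteq> s"
    then have "ennreal \<mu> \<le> ?t y" by (intro tlow)
    moreover have "0 < ennreal \<mu>" using mu_pos by simp
    ultimately show "?t s < ?t y" unfolding ts by (rule less_le_trans[rotated])
  qed
  define b where "b = ?ys ! 1"
  have b_in: "b \<in> set ?xs" and b_ne: "b \<noteq> s" and b_min: "\<And>y. y \<in> set ?xs \<Longrightarrow> y \<noteq> s \<Longrightarrow> ?t b \<le> ?t y"
  proof -
    note sk = sortkey_second[where t="?t", OF dxs lxs]
    show "b \<in> set ?xs" unfolding b_def by (rule sk(1))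
    show "b \<noteq> s" unfolding b_def using sk(2) y0 by simp
    show "\<And>y. y \<in> set ?xs \<Longrightarrow> y \<noteq> s \<Longrightarrow> ?t b \<le> ?t y" unfolding b_def using sk(3) y0 by simp
  qed
  have tb: "?t b < \<infinity>" using b_in setxs by auto
  have "{s, b} \<in> E"
  proof (rule ccontr)
    assume nE: "{s, b} \<notin> E"
    have "?t b + ennreal \<mu> \<le> (INF xs \<in> retained_walks E \<omega> s b.
      \<Sum>i < length xs - 1. ennreal (snd (\<omega> {xs ! i, xs ! Suc i})))"
    proof (rule INF_greatest)
      fix xs assume xs: "xs \<in> retained_walks E \<omega> s b"
      let ?w = "xs ! 1"
      have w1: "{s, ?w} \<in> E" "fst (\<omega> {s, ?w})" using walk_lower(2,3)[OF xs b_ne] by auto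
      have wb: "?w \<noteq> b" using w1 nE by auto
      have w2: "{?w, xs ! 2} \<in> E" and sm: "ennreal (snd (\<omega> {s, ?w})) + ennreal (snd (\<omega> {?w, xs ! 2}))
          \<le> (\<Sum>i < length xs - 1. ennreal (snd (\<omega> {xs ! i, xs ! Suc i})))"
        using walk_lower(5)[OF xs b_ne wb] by auto
      have tw: "?t ?w \<le> ennreal (snd (\<omega> {s, ?w}))" using w1 by (rule t_edge[where s=s and w="xs ! 1"])
      have wV: "?w \<in> V" "?w \<noteq> s" using edge_props[OF G w1(1)] by auto
      have "?w \<in> set ?xs" using tw wV setxs by (auto simp: le_less_trans)
      then have "?t b \<le> ?t ?w" using b_min wV by auto
      also have "\<dots> \<le> ennreal (snd (\<omega> {s, ?w}))" by (fact tw)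
      finally have "?t b + ennreal \<mu> \<le> ennreal (snd (\<omega> {s, ?w})) + ennreal (snd (\<omega> {?w, xs ! 2}))"
        using mu_le[OF w2] by (intro add_mono ennreal_leI)
      then show "?t b + ennreal \<mu> \<le> (\<Sum>i < length xs - 1. ennreal (snd (\<omega> {xs ! i, xs ! Suc i})))"
        using sm by (rule order_trans)
    qed
    then have "?t b + ennreal \<mu> \<le> ?t b + 0" by (simp add: infection_time_def)
    then have "ennreal \<mu> \<le> 0" using tb by (auto simp add: ennreal_add_left_cancel_le)
    with mu_pos show False by simp
  qed
  then show ?thesis using ys y0 b_def by simp
qed

lemma good_first:
  assumes G: "simple_graph V E" and pos: "\<forall>e\<in>E. 0 < snd (\<omega> e)"
    and uV: "u \<in> V" and e0: "{u, v} \<in> E" and ret: "fst (\<omega> {u, v})" and th: "snd (\<omega> {u, v}) \<le> \<theta>"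
    and oth: "\<forall>e\<in>E. u \<in> e \<and> e \<noteq> {u, v} \<longrightarrow> \<theta> < snd (\<omega> e)"
  shows "2 \<le> length (fstlist V E (u, \<omega>)) \<and> {fstlist V E (u, \<omega>) ! 0, fstlist V E (u, \<omega>) ! 1} = {u, v}"
proof -
  let ?t = "infection_time E \<omega> u"
  let ?xs = "filter (\<lambda>v. ?t v < \<infinity>) (sorted_list_of_set V)"
  let ?ys = "sort_key ?t ?xs"
  let ?l0 = "snd (\<omega> {u, v})"
  have finV: "finite V" using G by (simp add: simple_graph_def)
  have finE: "finite E"
  proof -
    have "E \<subseteq> Pow V" using G unfolding simple_graph_def by auto
    then show ?thesis using finV by (meson finite_Pow_iff finite_subset)
  qed
  have ys: "fstlist V E (u, \<omega>) = ?ys" by (simp add: fstlist_eq Let_def)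
  have setxs: "set ?xs = {v \<in> V. ?t v < \<infinity>}" using finV by auto
  have dxs: "distinct ?xs" by simp
  have uv: "u \<noteq> v" "v \<in> V" using edge_props[OF G e0] by auto
  have Ene: "E \<noteq> {}" using e0 by auto
  define \<mu> where "\<mu> = Min ((\<lambda>e. snd (\<omega> e)) ` E)"
  have mu_le: "\<And>e. e \<in> E \<Longrightarrow> \<mu> \<le> snd (\<omega> e)" unfolding \<mu>_def using finE by auto
  have mu_pos: "0 < \<mu>" unfolding \<mu>_def using finE Ene pos by (subst Min_gr_iff) auto
  have tlow: "\<And>w. w \<noteq> u \<Longrightarrow> ennreal \<mu> \<le> ?t w" by (rule t_lower) (auto intro: mu_le)
  have tu: "?t u = 0" by (rule t_self)
  have tv: "?t v \<le> ennreal ?l0" using e0 ret by (rule t_edge)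
  define K where "K = insert (?l0 + \<mu>) ((\<lambda>e. snd (\<omega> e)) ` {e \<in> E. u \<in> e \<and> e \<noteq> {u, v}})"
  define \<kappa> where "\<kappa> = Min K"
  have finK: "finite K" unfolding K_def using finE by auto
  have kap_le: "\<And>x. x \<in> K \<Longrightarrow> \<kappa> \<le> x" unfolding \<kappa>_def using finK by auto
  have allK: "\<forall>x\<in>K. ?l0 < x"
  proof
    fix x assume "x \<in> K"
    then consider "x = ?l0 + \<mu>" | e where "e \<in> E" "u \<in> e" "e \<noteq> {u, v}" "x = snd (\<omega> e)"
      unfolding K_def by blast
    then show "?l0 < x"
    proof cases
      case 1 then show ?thesis using mu_pos by simp
    next
      case 2 then show ?thesis using oth th by force
    qed
  qed
  have kap_gt: "?l0 < \<kappa>" unfolding \<kappa>_def using finK allK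
    by (subst Min_gr_iff) (auto simp: K_def)
  have far: "ennreal \<kappa> \<le> ?t w" if w: "w \<noteq> u" "w \<noteq> v" for w
    unfolding infection_time_def
  proof (rule INF_greatest)
    fix xs assume xs: "xs \<in> retained_walks E \<omega> u w"
    let ?w = "xs ! 1"
    let ?S = "\<Sum>i < length xs - 1. ennreal (snd (\<omega> {xs ! i, xs ! Suc i}))"
    have w1: "{u, ?w} \<in> E" using walk_lower(2)[OF xs w(1)] .
    show "ennreal \<kappa> \<le> ?S"
    proof (cases "{u, ?w} = {u, v}")
      case True
      have "?w \<noteq> u" using edge_props[OF G w1] by auto
      with True have wv: "?w = v" by (auto simp: doubleton_eq_iff)
      with w have "?w \<noteq> w" by simp
      from walk_lower(5)[OF xs w(1) this] have w2: "{?w, xs ! 2} \<in> E"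
        and sm: "ennreal (snd (\<omega> {u, ?w})) + ennreal (snd (\<omega> {?w, xs ! 2})) \<le> ?S" by auto
      have "\<kappa> \<le> ?l0 + \<mu>" by (rule kap_le) (simp add: K_def)
      also have "\<dots> \<le> snd (\<omega> {u, ?w}) + snd (\<omega> {?w, xs ! 2})" using wv mu_le[OF w2] by simp
      finally have "ennreal \<kappa> \<le> ennreal (snd (\<omega> {u, ?w}) + snd (\<omega> {?w, xs ! 2}))" by (rule ennreal_leI)
      also have "\<dots> = ennreal (snd (\<omega> {u, ?w})) + ennreal (snd (\<omega> {?w, xs ! 2}))"
        using pos w1 w2 by (intro ennreal_plus) auto
      also note sm
      finally show ?thesis .
    next
      case False
      have "\<kappa> \<le> snd (\<omega> {u, ?w})" by (rule kap_le) (use False w1 in \<open>auto simp: K_def\<close>)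
      then have "ennreal \<kappa> \<le> ennreal (snd (\<omega> {u, ?w}))" by (rule ennreal_leI)
      also have "\<dots> \<le> ?S" by (rule walk_lower(4)[OF xs w(1)])
      finally show ?thesis .
    qed
  qed
  have u_in: "u \<in> set ?xs" using setxs uV tu by simp
  have v_in: "v \<in> set ?xs" using setxs uv tv by (auto simp: le_less_trans)
  have lxs: "2 \<le> length ?xs"
  proof -
    have "card {u, v} \<le> card (set ?xs)" using u_in v_in by (intro card_mono) auto
    also have "\<dots> = length ?xs" using dxs by (rule distinct_card)
    finally show ?thesis using uv by simp
  qed
  have y0: "?ys ! 0 = u"
  proof (rule sortkey_first[OF u_in], intro ballI impI)
    fix y assume "y \<in> set ?xs" "y \<noteq> u"
    then have "ennreal \<mu> \<le> ?t y" by (intro tlow)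
    moreover have "0 < ennreal \<mu>" using mu_pos by simp
    ultimately show "?t u < ?t y" unfolding tu by (rule less_le_trans[rotated])
  qed
  define b where "b = ?ys ! 1"
  note sk = sortkey_second[where t="?t", OF dxs lxs]
  have b_ne: "b \<noteq> u" unfolding b_def using sk(2) y0 by simp
  have b_le: "?t b \<le> ?t v" unfolding b_def using sk(3)[OF v_in] y0 uv by simp
  have "b = v"
  proof (rule ccontr)
    assume "b \<noteq> v"
    then have "ennreal \<kappa> \<le> ?t b" using far b_ne by simp
    also have "\<dots> \<le> ennreal ?l0" using b_le tv by simp
    finally have kl: "ennreal \<kappa> \<le> ennreal ?l0" .
    have "0 \<le> ?l0" using pos e0 by (meson less_imp_le)
    with kl have "\<kappa> \<le> ?l0" by (simp add: ennreal_le_iff)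
    with kap_gt show False by simp
  qed
  then show ?thesis using ys y0 b_def lxs by simp
qed

lemma prob_C:
  assumes "finite V" "V \<noteq> {}" "0 \<le> p" "p \<le> 1" "0 < l"
  shows "prob_space (cascade_measure V E p l)"
  unfolding cascade_measure_def
  by (intro prob_space_pair prob_space_measure_pmf prob_space_PiM prob_edge assms)

lemma sets_EM:
  "{True} \<times> {0<..t} \<in> sets (edge_measure p l)" "UNIV \<times> {t<..} \<in> sets (edge_measure p l)"
  "UNIV \<times> {0<..} \<in> sets (edge_measure p l)"
  unfolding edge_measure_def by (auto intro!: pair_measureI)

lemma C_rect:
  assumes "finite V" "V \<noteq> {}" "0 \<le> p" "p \<le> 1" "0 < l" "finite E"
    and A: "\<And>e. e \<in> E \<Longrightarrow> A e \<in> sets (edge_measure p l)" and U: "U \<subseteq> V"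
  shows "measure (cascade_measure V E p l) (U \<times> Pi\<^sub>E E A) = (card U / card V) * (\<Prod>e\<in>E. measure (edge_measure p l) (A e))"
proof -
  have P1: "prob_space (measure_pmf (pmf_of_set V))" by (rule prob_space_measure_pmf)
  have P2: "prob_space (Pi\<^sub>M E (\<lambda>_. edge_measure p l))" using assms by (intro prob_space_PiM prob_edge) auto
  have m1: "measure (measure_pmf (pmf_of_set V)) U = card U / card V"
    using assms by (simp add: measure_pmf_of_set Int_absorb1)
  have m2: "measure (Pi\<^sub>M E (\<lambda>_. edge_measure p l)) (Pi\<^sub>E E A) = (\<Prod>e\<in>E. measure (edge_measure p l) (A e))"
    using assms by (intro PiM_rect prob_edge) auto
  show ?thesis unfolding cascade_measure_def
    by (subst pair_rect[OF P1 P2]) (auto simp: m1 m2 A intro!: sets_PiM_I_finite assms(6))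
qed

lemma one_minus_exp:
  fixes x :: real assumes "0 \<le> x" "x \<le> 1"
  shows "x / 2 \<le> 1 - exp (- x)"
proof -
  have "1 + x \<le> exp x" by simp
  then have "exp (- x) \<le> 1 / (1 + x)" using assms
    by (simp add: exp_minus field_simps)
  moreover have "x * x \<le> x" using assms by (simp add: mult_left_le_one_le)
  then have "x / 2 \<le> 1 - 1 / (1 + x)" using assms by (simp add: field_simps)
  ultimately show ?thesis by linarith
qed

definition Aset :: "real \<Rightarrow> nat set \<Rightarrow> nat \<Rightarrow> nat set \<Rightarrow> (bool \<times> real) set" where
  "Aset \<theta> e u e' = (if e' = e then {True} \<times> {0<..\<theta>} else if u \<in> e' then UNIV \<times> {\<theta><..} else UNIV \<times> {0<..})"

definition Good :: "nat set set \<Rightarrow> real \<Rightarrow> nat set \<Rightarrow> nat \<Rightarrow> (nat \<times> edge_sample) set" where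
  "Good E \<theta> e u = {u} \<times> Pi\<^sub>E E (Aset \<theta> e u)"

lemma Aset_sets: "Aset \<theta> e u e' \<in> sets (edge_measure p l)"
  unfolding Aset_def using sets_EM by auto

lemma good_prob:
  assumes fin: "finite V" "V \<noteq> {}" and p: "0 < p" "p \<le> 1" and l: "0 < l" and finE: "finite E"
    and e: "e \<in> E" "u \<in> e" and uV: "u \<in> V" and D: "degree E u \<le> D" "1 \<le> D"
  shows "p / (6 * card V * D) \<le> measure (cascade_measure V E p l) (Good E (1 / (D * l)) e u)"
proof -
  define \<theta> where "\<theta> = 1 / (D * l)"
  define X where "X = exp (- \<theta> * l)"
  let ?m = "\<lambda>e'. measure (edge_measure p l) (Aset \<theta> e u e')"
  have th0: "0 \<le> \<theta>" unfolding \<theta>_def using l D by simp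
  have thl: "\<theta> * l = 1 / D" unfolding \<theta>_def using l D by (simp add: field_simps)
  have me: "?m e = p * (1 - X)" unfolding Aset_def X_def using edge_meas(1)[OF _ p(2) l th0] p by simp
  have mo: "?m e' = (if u \<in> e' then X else 1)" if "e' \<noteq> e" for e'
    unfolding Aset_def X_def using edge_meas(2,3)[OF _ p(2) l th0] p that by simp
  have "(\<Prod>e'\<in>E. ?m e') = ?m e * (\<Prod>e'\<in>E - {e}. ?m e')"
    using finE e by (simp add: prod.remove)
  also have "(\<Prod>e'\<in>E - {e}. ?m e') = (\<Prod>e'\<in>E - {e}. if u \<in> e' then X else 1)"
    by (rule prod.cong) (auto simp: mo)
  also have "\<dots> = X ^ card ((E - {e}) \<inter> {e'. u \<in> e'})"
    using finE by (simp add: prod.If_cases)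
  finally have prodE: "(\<Prod>e'\<in>E. ?m e') = p * (1 - X) * X ^ card ((E - {e}) \<inter> {e'. u \<in> e'})"
    using me by simp
  have cardk: "card ((E - {e}) \<inter> {e'. u \<in> e'}) \<le> D - 1"
  proof -
    have "(E - {e}) \<inter> {e'. u \<in> e'} = {e' \<in> E. u \<in> e'} - {e}" by auto
    then have "card ((E - {e}) \<inter> {e'. u \<in> e'}) = degree E u - 1"
      using finE e by (simp add: degree_def card_Diff_singleton)
    then show ?thesis using D by simp
  qed
  have X01: "0 < X" "X \<le> 1" unfolding X_def using th0 l by auto
  have "X ^ (D - 1) \<le> X ^ card ((E - {e}) \<inter> {e'. u \<in> e'})"
    using cardk X01 by (intro power_decreasing) auto
  moreover have "X ^ (D - 1) = exp (- (real (D - 1) / D))"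
    unfolding X_def using thl by (simp add: exp_of_nat_mult[symmetric] field_simps)
  moreover have "exp (- 1) \<le> exp (- (real (D - 1) / D))"
    using D by (simp add: field_simps)
  moreover have "1 / 3 \<le> exp (- 1 :: real)"
    using exp_le by (simp add: exp_minus field_simps)
  ultimately have Xk: "1 / 3 \<le> X ^ card ((E - {e}) \<inter> {e'. u \<in> e'})" by linarith
  have X1: "1 / (2 * D) \<le> 1 - X"
  proof -
    have "X = exp (- (1 / D))" unfolding X_def using thl by simp
    then show ?thesis using one_minus_exp[of "1 / D"] D by (simp add: mult.commute)
  qed
  have "measure (cascade_measure V E p l) (Good E \<theta> e u) = (card {u} / card V) * (\<Prod>e'\<in>E. ?m e')"
    unfolding Good_def using fin p l finE uV by (intro C_rect Aset_sets) auto
  also have "\<dots> = (1 / card V) * (p * (1 - X) * X ^ card ((E - {e}) \<inter> {e'. u \<in> e'}))"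
    using prodE by simp
  finally have eq: "measure (cascade_measure V E p l) (Good E \<theta> e u) = (1 / card V) * (p * (1 - X) * X ^ card ((E - {e}) \<inter> {e'. u \<in> e'}))" .
  have "p / (6 * card V * D) = (1 / card V) * (p * (1 / (2 * D)) * (1 / 3))" by (simp add: field_simps)
  also have "\<dots> \<le> (1 / card V) * (p * (1 - X) * X ^ card ((E - {e}) \<inter> {e'. u \<in> e'}))"
    using p X1 Xk D X01 by (intro mult_left_mono mult_mono) auto
  finally show ?thesis using eq unfolding \<theta>_def by simp
qed

lemma space_C: "space (cascade_measure V E p l) = UNIV \<times> Pi\<^sub>E E (\<lambda>_. UNIV)"
  unfolding cascade_measure_def edge_measure_def by (simp add: space_pair_measure space_PiM)

lemma rect_sets:
  assumes "finite E" "\<And>e. e \<in> E \<Longrightarrow> A e \<in> sets (edge_measure p l)"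
  shows "U \<times> Pi\<^sub>E E A \<in> sets (cascade_measure V E p l)"
  unfolding cascade_measure_def using assms by (intro pair_measureI sets_PiM_I_finite) auto

lemma succ_incl:
  assumes G: "simple_graph V E" and th: "0 \<le> \<theta>"
    and pos: "\<forall>i<N. \<omega> i \<in> V \<times> Pi\<^sub>E E (\<lambda>_. UNIV \<times> {0<..})"
    and hit: "\<forall>e\<in>E. \<exists>i<N. \<omega> i \<in> Good E \<theta> e (ue e)"
    and ue: "\<forall>e\<in>E. \<exists>v. e = {ue e, v} \<and> ue e \<in> V"
  shows "\<omega> \<in> first_edge_succeeds N V E"
proof -
  have "first_edge (map (\<lambda>i. trace V E (snd (\<omega> i)) (fst (\<omega> i))) [0..<N]) = E"
    unfolding FE_eq
  proof (intro equalityI subsetI)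
    fix x assume "x \<in> {{fstlist V E (\<omega> i) ! 0, fstlist V E (\<omega> i) ! 1} |i. i < N \<and> 2 \<le> length (fstlist V E (\<omega> i))}"
    then obtain i where i: "i < N" "2 \<le> length (fstlist V E (\<omega> i))" "x = {fstlist V E (\<omega> i) ! 0, fstlist V E (\<omega> i) ! 1}"
      by blast
    obtain s w where sw: "\<omega> i = (s, w)" by (cases "\<omega> i")
    have "\<omega> i \<in> V \<times> Pi\<^sub>E E (\<lambda>_. UNIV \<times> {0<..})" using pos i(1) by blast
    then have "w \<in> Pi\<^sub>E E (\<lambda>_. UNIV \<times> {0<..})" using sw by simp
    then have pw: "\<forall>e\<in>E. 0 < snd (w e)" by (auto simp: PiE_iff)
    show "x \<in> E" using first_in_E[OF G pw] i sw by simp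
  next
    fix e assume e: "e \<in> E"
    obtain i where i: "i < N" "\<omega> i \<in> Good E \<theta> e (ue e)" using hit e by blast
    obtain v where v: "e = {ue e, v}" "ue e \<in> V" using ue e by blast
    obtain w where w: "\<omega> i = (ue e, w)" "w \<in> Pi\<^sub>E E (Aset \<theta> e (ue e))"
      using i(2) unfolding Good_def by (cases "\<omega> i") auto
    have wA: "\<And>e'. e' \<in> E \<Longrightarrow> w e' \<in> Aset \<theta> e (ue e) e'" using w(2) by (auto simp: PiE_iff)
    have pw: "\<forall>e'\<in>E. 0 < snd (w e')"
    proof
      fix e' assume "e' \<in> E"
      from wA[OF this] th show "0 < snd (w e')"
        unfolding Aset_def by (auto split: if_splits)
    qed
    have we: "fst (w e) \<and> snd (w e) \<le> \<theta>" using wA[OF e] unfolding Aset_def by auto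
    have oth: "\<forall>e'\<in>E. ue e \<in> e' \<and> e' \<noteq> e \<longrightarrow> \<theta> < snd (w e')"
    proof (intro ballI impI)
      fix e' assume "e' \<in> E" "ue e \<in> e' \<and> e' \<noteq> e"
      then show "\<theta> < snd (w e')" using wA[of e'] unfolding Aset_def by (auto simp del: insert_subset)
    qed
    have "2 \<le> length (fstlist V E (ue e, w)) \<and> {fstlist V E (ue e, w) ! 0, fstlist V E (ue e, w) ! 1} = {ue e, v}"
      using good_first[OF G pw v(2), of v \<theta>] e we oth v(1) by simp
    then show "e \<in> {{fstlist V E (\<omega> i) ! 0, fstlist V E (\<omega> i) ! 1} |i. i < N \<and> 2 \<le> length (fstlist V E (\<omega> i))}"
      using i(1) w(1) v(1) by (intro CollectI exI[of _ i]) auto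
  qed
  then show ?thesis unfolding first_edge_succeeds_def by simp
qed

lemma card_E_le:
  assumes G: "simple_graph V E"
  shows "card E \<le> card V ^ 2"
proof -
  have fin: "finite V" using G by (simp add: simple_graph_def)
  have "E \<subseteq> (\<lambda>(a,b). {a,b}) ` (V \<times> V)" using G unfolding simple_graph_def by auto
  then have "card E \<le> card ((\<lambda>(a,b). {a,b}) ` (V \<times> V))" using fin by (intro card_mono) auto
  also have "\<dots> \<le> card (V \<times> V)" by (rule card_image_le) (use fin in auto)
  also have "\<dots> = card V ^ 2" by (simp add: card_cartesian_product power2_eq_square)
  finally show ?thesis .
qed

lemma deg_le:
  assumes G: "simple_graph V E" and u: "u \<in> V"
  shows "degree E u \<le> max_degree V E"
proof -
  have fin: "finite V" using G by (simp add: simple_graph_def)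
  show ?thesis unfolding max_degree_def using fin u by (intro Max_ge) auto
qed

lemma deg_pos:
  assumes G: "simple_graph V E" and e: "e \<in> E" "u \<in> e"
  shows "1 \<le> degree E u"
proof -
  have fin: "finite V" using G by (simp add: simple_graph_def)
  have finE: "finite E"
  proof -
    have "E \<subseteq> Pow V" using G unfolding simple_graph_def by auto
    then show ?thesis using fin by (meson finite_Pow_iff finite_subset)
  qed
  have "{e' \<in> E. u \<in> e'} \<noteq> {}" using e by auto
  then show ?thesis unfolding degree_def using finE by (simp add: Suc_le_eq card_gt_0_iff)
qed

lemma exp_bound:
  fixes q m :: real and N :: nat and n d :: real
  assumes "q \<le> m" "m \<le> 1" "0 \<le> q" "(d + 2) * ln n \<le> q * N" "0 < n"
  shows "(1 - m) ^ N \<le> n powr (- (d + 2))"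
proof -
  have "(1 - m) ^ N \<le> (1 - q) ^ N" using assms by (intro power_mono) auto
  also have "\<dots> \<le> exp (- q) ^ N"
  proof (rule power_mono)
    show "1 - q \<le> exp (- q)" using exp_ge_add_one_self[of "- q"] by simp
    show "0 \<le> 1 - q" using assms by simp
  qed
  also have "\<dots> = exp (- (q * N))" by (simp add: exp_of_nat_mult[symmetric] mult.commute)
  also have "\<dots> \<le> exp (- ((d + 2) * ln n))" using assms(4) by simp
  also have "\<dots> = n powr (- (d + 2))" using assms(5) by (simp add: powr_def algebra_simps)
  finally show ?thesis .
qed

lemma main_bound:
  assumes G: "simple_graph V E" and Vne: "V \<noteq> {}" and p: "0 < p" "p \<le> 1" and l: "0 < l" and d: "0 < d"
    and N: "real N \<ge> (6 * (d + 2)) * real (card V) * real (max_degree V E) / p * ln (real (card V))"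
  shows "measure (cascades_measure N V E p l) (first_edge_succeeds N V E \<inter> space (cascades_measure N V E p l))
       \<ge> 1 - 1 / real (card V) powr d"
proof -
  let ?C = "cascade_measure V E p l"
  let ?M = "cascades_measure N V E p l"
  let ?n = "real (card V)"
  let ?D = "max_degree V E"
  have finV: "finite V" using G by (simp add: simple_graph_def)
  have finE: "finite E"
  proof -
    have "E \<subseteq> Pow V" using G unfolding simple_graph_def by auto
    then show ?thesis using finV by (meson finite_Pow_iff finite_subset)
  qed
  have npos: "0 < ?n" using finV Vne by (simp add: card_gt_0_iff)
  have PC: "prob_space ?C" using finV Vne p l by (intro prob_C) auto
  interpret C: prob_space ?C by (fact PC)
  have PM: "prob_space ?M" unfolding cascades_measure_def by (intro prob_space_PiM PC)
  interpret M: prob_space ?M by (fact PM)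
  have spM: "space ?M = Pi\<^sub>E {..<N} (\<lambda>_. space ?C)" unfolding cascades_measure_def by (simp add: space_PiM)
  define \<theta> where "\<theta> = 1 / (real ?D * l)"
  have th0: "0 \<le> \<theta>" unfolding \<theta>_def using l by simp
  define ue where "ue e = (SOME u. \<exists>v. e = {u, v} \<and> u \<in> V \<and> u \<noteq> v)" for e
  have ue: "\<exists>v. e = {ue e, v} \<and> ue e \<in> V \<and> ue e \<noteq> v" if "e \<in> E" for e
  proof -
    have "\<exists>u v. e = {u, v} \<and> u \<in> V \<and> u \<noteq> v" using G that unfolding simple_graph_def by blast
    then have "\<exists>u. \<exists>v. e = {u, v} \<and> u \<in> V \<and> u \<noteq> v" by blast
    then show ?thesis unfolding ue_def by (rule someI_ex)
  qed
  define Ge where "Ge e = Good E \<theta> e (ue e)" for e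
  define Pos where "Pos = V \<times> Pi\<^sub>E E (\<lambda>_. (UNIV::bool set) \<times> {0::real<..})"
  define PosN where "PosN = Pi\<^sub>E {..<N} (\<lambda>_. Pos)"
  define Miss where "Miss e = Pi\<^sub>E {..<N} (\<lambda>_. space ?C - Ge e)" for e
  have Ge_sets: "Ge e \<in> sets ?C" for e unfolding Ge_def Good_def by (intro rect_sets finE Aset_sets)
  have Pos_sets: "Pos \<in> sets ?C" unfolding Pos_def by (intro rect_sets finE sets_EM)
  have PosN_sets: "PosN \<in> sets ?M" unfolding PosN_def cascades_measure_def
    using Pos_sets by (intro sets_PiM_I_finite) auto
  have Miss_sets: "Miss e \<in> sets ?M" for e unfolding Miss_def cascades_measure_def
    using Ge_sets by (intro sets_PiM_I_finite) auto
  define B where "B = PosN - (\<Union>e\<in>E. Miss e)"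
  have Pos_sp: "Pos \<subseteq> space ?C" unfolding Pos_def space_C by auto
  have B_sub: "B \<subseteq> first_edge_succeeds N V E \<inter> space ?M"
  proof
    fix \<omega> assume \<omega>: "\<omega> \<in> B"
    then have wP: "\<omega> \<in> PosN" and wM: "\<And>e. e \<in> E \<Longrightarrow> \<omega> \<notin> Miss e" unfolding B_def by auto
    have wsp: "\<omega> \<in> space ?M" using wP Pos_sp unfolding spM PosN_def by (auto simp: PiE_iff)
    have pos: "\<forall>i<N. \<omega> i \<in> V \<times> Pi\<^sub>E E (\<lambda>_. UNIV \<times> {0<..})" using wP unfolding PosN_def Pos_def by (auto simp: PiE_iff)
    have hit: "\<forall>e\<in>E. \<exists>i<N. \<omega> i \<in> Good E \<theta> e (ue e)"
    proof
      fix e assume e: "e \<in> E"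
      show "\<exists>i<N. \<omega> i \<in> Good E \<theta> e (ue e)"
      proof (rule ccontr)
        assume "\<not> (\<exists>i<N. \<omega> i \<in> Good E \<theta> e (ue e))"
        then have "\<omega> \<in> Miss e" using wsp unfolding Miss_def spM Ge_def by (auto simp: PiE_iff)
        with wM e show False by blast
      qed
    qed
    have ue': "\<forall>e\<in>E. \<exists>v. e = {ue e, v} \<and> ue e \<in> V" using ue by blast
    show "\<omega> \<in> first_edge_succeeds N V E \<inter> space ?M"
      using succ_incl[OF G th0 pos hit ue'] wsp by simp
  qed
  have em3: "measure (edge_measure p l) (UNIV \<times> {0<..}) = 1" using edge_meas(3)[of p l 0] p l by simp
  have mPos: "measure ?C Pos = 1"
    unfolding Pos_def using finV Vne p l finE
    by (subst C_rect) (auto intro: sets_EM simp: em3)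
  have mPosN: "measure ?M PosN = 1"
    unfolding PosN_def cascades_measure_def using PC Pos_sets mPos by (subst PiM_rect) auto
  have miss_bound: "measure ?M (Miss e) \<le> ?n powr (- (d + 2))" if e: "e \<in> E" for e
  proof -
    obtain v where v: "e = {ue e, v}" "ue e \<in> V" using ue[OF e] by blast
    have ueE: "ue e \<in> e" using v by auto
    have Dpos: "1 \<le> ?D" using deg_pos[OF G e ueE] deg_le[OF G v(2)] by simp
    define q where "q = p / (6 * ?n * ?D)"
    have q: "q \<le> measure ?C (Ge e)" unfolding q_def Ge_def \<theta>_def
      using good_prob[OF finV Vne p l finE e ueE v(2) deg_le[OF G v(2)] Dpos] by simp
    have mM: "measure ?M (Miss e) = (measure ?C (space ?C - Ge e)) ^ N"
      unfolding Miss_def cascades_measure_def using PC Ge_sets by (subst PiM_rect) auto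
    have mc: "measure ?C (space ?C - Ge e) = 1 - measure ?C (Ge e)" using Ge_sets by (rule C.prob_compl)
    have qN: "(d + 2) * ln ?n \<le> q * N"
    proof -
      have "(d + 2) * ln ?n = q * ((6 * (d + 2)) * ?n * ?D / p * ln ?n)"
        unfolding q_def using p Dpos npos by (simp add: field_simps)
      also have "\<dots> \<le> q * N" using N p Dpos npos unfolding q_def by (intro mult_left_mono) auto
      finally show ?thesis .
    qed
    have "(1 - measure ?C (Ge e)) ^ N \<le> ?n powr (- (d + 2))"
      using exp_bound[OF q C.prob_le_1 _ qN npos] p Dpos npos unfolding q_def by simp
    then show ?thesis using mM mc by simp
  qed
  have "measure ?M PosN \<le> measure ?M (B \<union> (\<Union>e\<in>E. Miss e))"
    using PosN_sets Miss_sets finE unfolding B_def by (intro M.finite_measure_mono) auto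
  also have "\<dots> \<le> measure ?M B + measure ?M (\<Union>e\<in>E. Miss e)"
    using PosN_sets Miss_sets finE unfolding B_def by (intro measure_Un_le) auto
  also have "measure ?M (\<Union>e\<in>E. Miss e) \<le> (\<Sum>e\<in>E. measure ?M (Miss e))"
    using Miss_sets finE by (intro M.finite_measure_subadditive_finite) auto
  also have "\<dots> \<le> (\<Sum>e\<in>E. ?n powr (- (d + 2)))" by (intro sum_mono miss_bound)
  also have "\<dots> = card E * ?n powr (- (d + 2))" by simp
  also have "\<dots> \<le> ?n ^ 2 * ?n powr (- (d + 2))"
  proof (rule mult_right_mono)
    show "real (card E) \<le> ?n ^ 2" using card_E_le[OF G] by (metis of_nat_le_iff of_nat_power)
  qed simp
  also have "?n ^ 2 * ?n powr (- (d + 2)) = 1 / ?n powr d"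
  proof -
    have "?n ^ 2 = ?n powr (2::real)" using powr_realpow[OF npos, of 2] by simp
    then have "?n ^ 2 * ?n powr (- (d + 2)) = ?n powr (2 + - (d + 2))" by (simp only: powr_add)
    also have "(2::real) + - (d + 2) = - d" by simp
    finally show ?thesis by (simp only: powr_minus_divide)
  qed
  finally have "1 - 1 / ?n powr d \<le> measure ?M B" using mPosN by simp
  also have "measure ?M B \<le> measure ?M (first_edge_succeeds N V E \<inter> space ?M)"
    using B_sub succeeds_meas[OF finV finE] by (intro M.finite_measure_mono)
  finally show ?thesis .
qed

theorem theorem1:
  "\<forall>d::real > 0. \<exists>c::real > 0. \<forall>(V::nat set) (E::nat set set) (p::real) (l::real) (N::nat).
     simple_graph V E \<longrightarrow> V \<noteq> {} \<longrightarrow> 0 < p \<longrightarrow> p \<le> 1 \<longrightarrow> 0 < l \<longrightarrow>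
     real N \<ge> c * real (card V) * real (max_degree V E) / p * ln (real (card V)) \<longrightarrow>
     measure (cascades_measure N V E p l)
        (first_edge_succeeds N V E \<inter> space (cascades_measure N V E p l))
       \<ge> 1 - 1 / real (card V) powr d"
proof (intro allI impI)
  fix d :: real assume d: "0 < d"
  show "\<exists>c::real > 0. \<forall>(V::nat set) (E::nat set set) (p::real) (l::real) (N::nat).
     simple_graph V E \<longrightarrow> V \<noteq> {} \<longrightarrow> 0 < p \<longrightarrow> p \<le> 1 \<longrightarrow> 0 < l \<longrightarrow>
     real N \<ge> c * real (card V) * real (max_degree V E) / p * ln (real (card V)) \<longrightarrow>
     measure (cascades_measure N V E p l)
        (first_edge_succeeds N V E \<inter> space (cascades_measure N V E p l))
       \<ge> 1 - 1 / real (card V) powr d"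
    using d by (intro exI[of _ "6 * (d + 2)"]) (auto intro!: main_bound)
qed

end
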